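(* For all integers $n\geq 0$, \[ \sum_{k=0}^{\lfloor (n+1)/2\rfloor}(-1)^k\frac{\binom{2(n-k)}{n-k}}{\binom nk}\frac{(n+1-2k)_{2k}}{(k!)^2}=2^n \] and \[ \sum_{k=0}^{\lfloor (n+1)/2\rfloor}(-1)^k\frac{\binom{2(n-k)}{n-k}}{\binom nk}\frac{(n+1-2k)_{2k}}{(k!)^2}O_{n-k}=2^nH_n. \]
   Context: $(\lambda)_m=\lambda(\lambda+1)\cdots(\lambda+m-1)$ with $(\lambda)_0=1$ is the Pochhammer symbol. $H_n=\sum_{j=1}^n\frac1j$ ($H_0=0$) and $O_n=\sum_{j=1}^n\frac1{2j-1}$ ($O_0=0$). Terms with $k>n$ vanish because of the factor $(n+1-2k)_{2k}=0$ (by convention such terms are $0$; this only occurs for $n=0$... not at all, since $\lfloor (n+1)/2\rfloor\le n$ for $n\ge1$ and the sum is the single term $k=0$ for $n=0$). *)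

theory Defs
  imports "HOL-Analysis.Analysis"
begin

definition oharm :: "nat \<Rightarrow> real" where
  "oharm n = (\<Sum>j=1..n. 1 / (2 * real j - 1))"

end

theory Submission
  imports Defs "HOL-Computational_Algebra.Formal_Power_Series"
begin
unbundle no vec_syntax
notation fps_nth (infixl \<open>$\<close> 75)

lemma omx_pow_nth: "((1 - fps_X :: real fps)^i) $ j = (-1)^j * real (i choose j)"
proof (induction i arbitrary: j)
  case 0 then show ?case by (cases j) auto
next
  case (Suc i)
  have "((1 - fps_X :: real fps)^Suc i) $ j = ((1 - fps_X)^i) $ j - (fps_X * (1 - fps_X)^i) $ j"
    by (simp add: algebra_simps)
  also have "\<dots> = (-1)^j * real (Suc i choose j)"
  proof (cases j)
    case 0 then show ?thesis using Suc by simp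
  next
    case (Suc j') then show ?thesis using Suc.IH by (simp add: fps_X_mult_nth algebra_simps)
  qed
  finally show ?case .
qed

lemma P_pow_nth: "((fps_X - fps_X^2 :: real fps)^i) $ n = (if i \<le> n then (-1)^(n-i) * real (i choose (n-i)) else 0)"
proof -
  have "(fps_X - fps_X^2 :: real fps)^i = fps_X^i * (1 - fps_X)^i"
    by (simp add: power_mult_distrib[symmetric] algebra_simps power2_eq_square)
  show ?thesis unfolding \<open>(fps_X - fps_X^2 :: real fps)^i = _\<close> fps_X_power_mult_nth omx_pow_nth by simp
qed

definition cc :: "nat \<Rightarrow> real" where "cc m = real ((2*m) choose m)"

lemma cc_Suc: "real (Suc m) * cc (Suc m) = (4 * real m + 2) * cc m"
proof -
  have c1: "cc (Suc m) * (fact (Suc m))^2 = (fact (2*m+2) :: real)"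
  proof -
    have "cc (Suc m) = fact (2*m+2) / (fact (Suc m) * fact (Suc m))"
      unfolding cc_def by (subst binomial_fact) auto
    then show ?thesis by (simp add: power2_eq_square del: fact_Suc)
  qed
  have c0: "cc m * (fact m)^2 = (fact (2*m) :: real)"
  proof -
    have "cc m = fact (2*m) / (fact m * fact m)"
      unfolding cc_def by (subst binomial_fact) auto
    then show ?thesis by (simp add: power2_eq_square)
  qed
  have f2: "fact (2*m+2) = (2*real m+2)*(2*real m+1)* (fact (2*m) :: real)"
    by (simp add: fact_Suc numeral_2_eq_2 algebra_simps)
  have fs: "fact (Suc m) = real (Suc m) * fact m" by simp
  have e: "(cc (Suc m) * (real (Suc m))^2) * (fact m)^2 = ((2*real m+2)*(2*real m+1) * cc m) * (fact m)^2"
  proof -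
    have "(cc (Suc m) * (real (Suc m))^2) * (fact m)^2 = cc (Suc m) * (fact (Suc m))^2"
      by (simp only: fs power_mult_distrib mult.assoc)
    also have "\<dots> = fact (2*m+2)" by (rule c1)
    also have "\<dots> = (2*real m+2)*(2*real m+1) * (cc m * (fact m)^2)" using f2 c0 by simp
    finally show ?thesis by (simp only: mult.assoc)
  qed
  then have e2: "(cc (Suc m) * (real (Suc m))^2) = ((2*real m+2)*(2*real m+1) * cc m)"
    by (simp del: fact_Suc)
  then have "real (Suc m) * (real (Suc m) * cc (Suc m)) = real (Suc m) * ((4 * real m + 2) * cc m)"
    by (simp add: power2_eq_square algebra_simps)
  then show ?thesis
    using mult_left_cancel[of "real (Suc m)" "real (Suc m) * cc (Suc m)" "(4 * real m + 2) * cc m"] by (simp del: of_nat_Suc)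
qed

lemma oharm_Suc: "oharm (Suc m) = oharm m + 1 / (2 * real m + 1)"
  unfolding oharm_def by (simp add: algebra_simps)

definition P :: "real fps" where "P = fps_X - fps_X^2"
definition F :: "real fps" where "F = Abs_fps cc"
definition G :: "real fps" where "G = Abs_fps (\<lambda>m. cc m * oharm m)"

lemma P0: "P $ 0 = 0" by (simp add: P_def)

lemma lin_nth: "((1 - fps_const (c::real) * fps_X) * f) $ n = f $ n - c * (if n = 0 then 0 else f $ (n - 1))"
proof -
  have "(1 - fps_const c * fps_X) * f = f - fps_const c * (fps_X * f)" by (simp only: left_diff_distrib mult_1 mult.assoc)
  then show ?thesis by (simp add: fps_X_mult_nth)
qed

lemma F_ode: "(1 - fps_const 4 * fps_X) * fps_deriv F = fps_const 2 * F"
proof (rule fps_ext)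
  fix n
  show "((1 - fps_const 4 * fps_X) * fps_deriv F) $ n = (fps_const 2 * F) $ n"
    unfolding lin_nth using cc_Suc[of n] cc_Suc[of "n-1"]
    by (cases n) (simp_all add: F_def algebra_simps)
qed

lemma G_ode: "(1 - fps_const 4 * fps_X) * fps_deriv G = fps_const 2 * G + fps_const 2 * F"
proof (rule fps_ext)
  fix n
  have h: "real (Suc m) * (cc (Suc m) * oharm (Suc m)) = (4 * real m + 2) * cc m * oharm m + 2 * cc m" for m
  proof -
    have "real (Suc m) * (cc (Suc m) * oharm (Suc m)) = (4 * real m + 2) * cc m * (oharm m + 1 / (2 * real m + 1))"
      using cc_Suc[of m] oharm_Suc[of m] by (simp add: mult.assoc[symmetric])
    also have "\<dots> = (4 * real m + 2) * cc m * oharm m + 2 * cc m"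
      by (simp add: field_simps)
    finally show ?thesis .
  qed
  show "((1 - fps_const 4 * fps_X) * fps_deriv G) $ n = (fps_const 2 * G + fps_const 2 * F) $ n"
    unfolding lin_nth using h[of n] h[of "n-1"]
    by (cases n) (simp_all add: F_def G_def algebra_simps)
qed

lemma compose_lin: "(1 - fps_const 4 * fps_X) oo P = (1 - fps_const 2 * fps_X)^2"
  by (simp add: fps_compose_sub_distrib fps_compose_mult_distrib P0 P_def power2_eq_square algebra_simps
      flip: fps_const_mult)

lemma dP: "fps_deriv P = 1 - fps_const 2 * fps_X"
  by (simp add: P_def fps_deriv_power flip: fps_const_neg)

lemma compose_const2: "(fps_const 2 * H) oo P = fps_const 2 * (H oo P)"
  by (simp add: fps_compose_mult_distrib P0)

lemma A_ode: "(1 - fps_const 2 * fps_X) * fps_deriv (F oo P) = fps_const 2 * (F oo P)"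
proof -
  have "(1 - fps_const 2 * fps_X) * fps_deriv (F oo P) = (1 - fps_const 2 * fps_X)^2 * (fps_deriv F oo P)"
    by (simp add: fps_compose_deriv P0 dP power2_eq_square mult_ac)
  also have "\<dots> = ((1 - fps_const 4 * fps_X) oo P) * (fps_deriv F oo P)"
    by (simp only: compose_lin)
  also have "\<dots> = ((1 - fps_const 4 * fps_X) * fps_deriv F) oo P"
    by (simp add: fps_compose_mult_distrib P0)
  also have "\<dots> = fps_const 2 * (F oo P)" by (simp add: F_ode compose_const2)
  finally show ?thesis .
qed

lemma B_ode: "(1 - fps_const 2 * fps_X) * fps_deriv (G oo P) = fps_const 2 * (G oo P) + fps_const 2 * (F oo P)"
proof -
  have "(1 - fps_const 2 * fps_X) * fps_deriv (G oo P) = (1 - fps_const 2 * fps_X)^2 * (fps_deriv G oo P)"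
    by (simp add: fps_compose_deriv P0 dP power2_eq_square mult_ac)
  also have "\<dots> = ((1 - fps_const 4 * fps_X) oo P) * (fps_deriv G oo P)"
    by (simp only: compose_lin)
  also have "\<dots> = ((1 - fps_const 4 * fps_X) * fps_deriv G) oo P"
    by (simp add: fps_compose_mult_distrib P0)
  also have "\<dots> = fps_const 2 * (G oo P) + fps_const 2 * (F oo P)"
    by (simp add: G_ode compose_const2 fps_compose_add_distrib)
  finally show ?thesis .
qed

lemma deriv_nth: "((1 - fps_const 2 * fps_X) * fps_deriv H) $ n = real (n+1) * H $ (n+1) - 2 * real n * H $ n"
  unfolding lin_nth by (cases n) (simp_all add: algebra_simps)

lemma A_val: "(F oo P) $ n = 2^n"
proof (induction n)
  case 0 then show ?case by (simp add: F_def cc_def)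
next
  case (Suc n)
  have "((1 - fps_const 2 * fps_X) * fps_deriv (F oo P)) $ n = (fps_const 2 * (F oo P)) $ n"
    by (simp only: A_ode)
  then have "real (n+1) * (F oo P) $ (n+1) - 2 * real n * (F oo P) $ n = 2 * (F oo P) $ n"
    unfolding deriv_nth by simp
  then have "real (n+1) * (F oo P) $ (n+1) = real (n+1) * (2 * 2^n)" using Suc.IH by (simp add: algebra_simps)
  then have "(F oo P) $ (n+1) = 2 * 2^n"
    using mult_left_cancel[of "real (n+1)" "(F oo P) $ (n+1)" "2 * 2^n"] by (simp del: of_nat_Suc)
  then show ?case by simp
qed

lemma B_val: "(G oo P) $ n = 2^n * harm n"
proof (induction n)
  case 0 then show ?case by (simp add: G_def cc_def oharm_def harm_def)
next
  case (Suc n)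
  have "((1 - fps_const 2 * fps_X) * fps_deriv (G oo P)) $ n = (fps_const 2 * (G oo P) + fps_const 2 * (F oo P)) $ n"
    by (simp only: B_ode)
  then have "real (n+1) * (G oo P) $ (n+1) - 2 * real n * (G oo P) $ n = 2 * (G oo P) $ n + 2 * 2^n"
    unfolding deriv_nth by (simp add: A_val)
  then have "real (n+1) * (G oo P) $ (n+1) = real (n+1) * (2^(Suc n) * harm (Suc n))"
    using Suc.IH by (simp add: algebra_simps harm_Suc field_simps)
  then have "(G oo P) $ (n+1) = 2^(Suc n) * harm (Suc n)"
    using mult_left_cancel[of "real (n+1)" "(G oo P) $ (n+1)" "2^(Suc n) * harm (Suc n)"] by (simp del: of_nat_Suc)
  then show ?case by simp
qed

lemma compose_expl: "(Abs_fps a oo P) $ n = (\<Sum>k=0..n. (-1)^k * a (n-k) * real ((n-k) choose k))"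
proof -
  have "(Abs_fps a oo P) $ n = (\<Sum>i=0..n. a i * ((-1)^(n-i) * real (i choose (n-i))))"
    unfolding fps_compose_nth P_def P_pow_nth by (intro sum.cong) auto
  also have "\<dots> = (\<Sum>k=0..n. a (n-k) * ((-1)^(n-(n-k)) * real ((n-k) choose (n-(n-k)))))"
    by (subst sum.atLeastAtMost_rev) simp
  also have "\<dots> = (\<Sum>k=0..n. (-1)^k * a (n-k) * real ((n-k) choose k))"
    by (intro sum.cong) auto
  finally show ?thesis .
qed

lemma comb_id: "real (n choose (2*k)) * fact (2*k) = real ((n-k) choose k) * real (n choose k) * (fact k)^2"
proof (cases "2*k \<le> n")
  case True
  have a: "real (n choose (2*k)) = fact n / (fact (2*k) * fact (n - 2*k))" using True by (rule binomial_fact)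
  have b: "real ((n-k) choose k) = fact (n-k) / (fact k * fact (n - 2*k))"
    using True binomial_fact[of k "n-k", where 'a=real] by (simp add: diff_diff_left mult_2)
  have c: "real (n choose k) = fact n / (fact k * fact (n - k))" using True by (intro binomial_fact) simp
  show ?thesis unfolding a b c by (simp add: field_simps power2_eq_square)
next
  case False
  have h1: "n choose (2*k) = 0" using False by (simp add: binomial_eq_0)
  have h2: "(n-k) choose k = 0" using False by (simp add: binomial_eq_0)
  show ?thesis unfolding h1 h2 by simp
qed

lemma term_eq:
  assumes "k \<le> n"
  shows "pochhammer (real n + 1 - 2 * real k) (2*k) / (fact k)^2 / real (n choose k) = real ((n-k) choose k)"
proof -
  have "pochhammer (real n + 1 - 2 * real k) (2*k) = (real n gchoose (2*k)) * fact (2*k)"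
    using gbinomial_pochhammer'[of "real n" "2*k"] by (simp add: algebra_simps)
  also have "\<dots> = real (n choose (2*k)) * fact (2*k)" by (simp add: binomial_gbinomial)
  finally show ?thesis using comb_id[of n k] assms by (simp add: field_simps)
qed

lemma sum_ext:
  fixes a :: "nat \<Rightarrow> real"
  shows "(\<Sum>k=0..(n+1) div 2. (-1)^k * a (n-k) * real ((n-k) choose k)) = (\<Sum>k=0..n. (-1)^k * a (n-k) * real ((n-k) choose k))"
proof (rule sum.mono_neutral_left)
  show "{0..(n+1) div 2} \<subseteq> {0..n}" by (cases n) auto
qed auto

theorem theorem11:
  fixes n :: nat
  shows "(\<Sum>k=0..(n+1) div 2. (-1)^k * (real ((2*(n-k)) choose (n-k)) / real (n choose k))
            * (pochhammer (real n + 1 - 2 * real k) (2*k) / (fact k)^2)) = 2^n \<and>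
         (\<Sum>k=0..(n+1) div 2. (-1)^k * (real ((2*(n-k)) choose (n-k)) / real (n choose k))
            * (pochhammer (real n + 1 - 2 * real k) (2*k) / (fact k)^2) * oharm (n-k)) = 2^n * harm n"
proof -
  have kn: "k \<le> n" if "k \<in> {0..(n+1) div 2}" for k using that by (cases n) auto
  have t: "(real ((2*(n-k)) choose (n-k)) / real (n choose k)) * (pochhammer (real n + 1 - 2 * real k) (2*k) / (fact k)^2)
      = cc (n-k) * real ((n-k) choose k)" if "k \<le> n" for k
  proof -
    have "(real ((2*(n-k)) choose (n-k)) / real (n choose k)) * (pochhammer (real n + 1 - 2 * real k) (2*k) / (fact k)^2)
      = real ((2*(n-k)) choose (n-k)) * (pochhammer (real n + 1 - 2 * real k) (2*k) / (fact k)^2 / real (n choose k))"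
      by (simp add: mult_ac)
    also have "\<dots> = real ((2*(n-k)) choose (n-k)) * real ((n-k) choose k)"
      by (simp only: term_eq[OF that])
    finally show ?thesis unfolding cc_def .
  qed
  have "(\<Sum>k=0..(n+1) div 2. (-1)^k * (real ((2*(n-k)) choose (n-k)) / real (n choose k))
            * (pochhammer (real n + 1 - 2 * real k) (2*k) / (fact k)^2))
      = (\<Sum>k=0..(n+1) div 2. (-1)^k * cc (n-k) * real ((n-k) choose k))"
  proof (intro sum.cong refl)
    fix x assume "x \<in> {0..(n+1) div 2}"
    from t[OF kn[OF this]] show "(-1)^x * (real ((2*(n-x)) choose (n-x)) / real (n choose x))
            * (pochhammer (real n + 1 - 2 * real x) (2*x) / (fact x)^2) = (-1)^x * cc (n-x) * real ((n-x) choose x)"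
      by (simp only: mult.assoc)
  qed
  also have "\<dots> = (F oo P) $ n" unfolding sum_ext F_def compose_expl ..
  finally have 1: "(\<Sum>k=0..(n+1) div 2. (-1)^k * (real ((2*(n-k)) choose (n-k)) / real (n choose k))
            * (pochhammer (real n + 1 - 2 * real k) (2*k) / (fact k)^2)) = 2^n" by (simp add: A_val)
  have "(\<Sum>k=0..(n+1) div 2. (-1)^k * (real ((2*(n-k)) choose (n-k)) / real (n choose k))
            * (pochhammer (real n + 1 - 2 * real k) (2*k) / (fact k)^2) * oharm (n-k))
      = (\<Sum>k=0..(n+1) div 2. (-1)^k * (cc (n-k) * oharm (n-k)) * real ((n-k) choose k))"
  proof (intro sum.cong refl)
    fix x assume "x \<in> {0..(n+1) div 2}"
    from t[OF kn[OF this]] have "(-1)^x * (real ((2*(n-x)) choose (n-x)) / real (n choose x))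
            * (pochhammer (real n + 1 - 2 * real x) (2*x) / (fact x)^2) = (-1)^x * (cc (n-x) * real ((n-x) choose x))"
      by (simp only: mult.assoc)
    then show "(-1)^x * (real ((2*(n-x)) choose (n-x)) / real (n choose x))
            * (pochhammer (real n + 1 - 2 * real x) (2*x) / (fact x)^2) * oharm (n-x) = (-1)^x * (cc (n-x) * oharm (n-x)) * real ((n-x) choose x)"
      by (simp add: mult_ac)
  qed
  also have "\<dots> = (G oo P) $ n" unfolding sum_ext[where a="\<lambda>m. cc m * oharm m"] G_def compose_expl ..
  finally have 2: "(\<Sum>k=0..(n+1) div 2. (-1)^k * (real ((2*(n-k)) choose (n-k)) / real (n choose k))
            * (pochhammer (real n + 1 - 2 * real k) (2*k) / (fact k)^2) * oharm (n-k)) = 2^n * harm n"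
    by (simp add: B_val)
  from 1 2 show ?thesis ..
qed

end
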